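(* Let $k\ge 2$ and let $p,q$ be real polynomials with $\deg p=k$, $\deg q=k-1$, whose roots are all real and simple and strictly interlace: $p_1<q_1<p_2<q_2<\dots<q_{k-1}<p_k$, where $p_1<\dots<p_k$ are the roots of $p$ and $q_1<\dots<q_{k-1}$ those of $q$. Then every root of the Wronskian $W(p,q)=p'q-q'p$ lies in the set $\Omega_p=\overline{D_0}\setminus\bigcup_{j=1}^{k-1}D_j$.
   Context: For $j=1,\dots,k-1$, $D_j\subset\mathbb{C}$ denotes the open disk whose boundary circle $C_j$ has the segment $[p_j,p_{j+1}]$ as a diameter (center $\frac{p_j+p_{j+1}}2$, radius $\frac{p_{j+1}-p_j}2$); $D_0$ denotes the open disk whose boundary circle $C_0$ has $[p_1,p_k]$ as a diameter; $\overline{D_0}$ is its closure. *)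

theory Defs
  imports "HOL-Analysis.Analysis" "HOL-Computational_Algebra.Polynomial"
begin

definition wronskian :: "real poly \<Rightarrow> real poly \<Rightarrow> real poly" where
  "wronskian p q = pderiv p * q - pderiv q * p"

definition diam_disk :: "real \<Rightarrow> real \<Rightarrow> complex set" where
  "diam_disk a b = ball (complex_of_real ((a + b) / 2)) ((b - a) / 2)"

text \<open>Omega_p = closure(D_0) minus union of D_j, roots indexed 1..k.\<close>
definition Omega :: "nat \<Rightarrow> (nat \<Rightarrow> real) \<Rightarrow> complex set" where
  "Omega k r = closure (diam_disk (r 1) (r k)) - (\<Union>j\<in>{1..k-1}. diam_disk (r j) (r (j+1)))"

end

theory Submission imports Defs begin

lemma mp_add: "map_poly (of_real::real\<Rightarrow>complex) (p + q) = map_poly of_real p + map_poly of_real q"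
  by (intro poly_eqI) (simp add: coeff_map_poly)

lemma mp_smult: "map_poly (of_real::real\<Rightarrow>complex) (smult c p) = smult (of_real c) (map_poly of_real p)"
  by (rule map_poly_smult) auto

lemma mp_mult: "map_poly (of_real::real\<Rightarrow>complex) (p * q) = map_poly of_real p * map_poly of_real q"
proof (induct p rule: pCons_induct)
  case 0 then show ?case by simp
next
  case (pCons a p)
  then show ?case by (simp add: mp_add mp_smult map_poly_pCons)
qed

lemma mp_sum: "map_poly (of_real::real\<Rightarrow>complex) (\<Sum>i\<in>A. f i) = (\<Sum>i\<in>A. map_poly of_real (f i))"
  by (induct A rule: infinite_finite_induct) (auto simp: mp_add)

lemma mp_prod: "map_poly (of_real::real\<Rightarrow>complex) (\<Prod>i\<in>A. f i) = (\<Prod>i\<in>A. map_poly of_real (f i))"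
  by (induct A rule: infinite_finite_induct) (auto simp: mp_mult)

lemma mp_lin: "map_poly (of_real::real\<Rightarrow>complex) [:-x,1:] = [:-of_real x, 1:]"
  by (simp add: map_poly_pCons)

lemma pderiv_sum': "pderiv (\<Sum>i\<in>A. f i) = (\<Sum>i\<in>A. pderiv (f i))"
  by (induct A rule: infinite_finite_induct) (auto simp: pderiv_add)

lemma wr_lin:
  fixes h :: "'a::field poly"
  assumes "p = [:-x,1:] * h"
  shows "pderiv p * h - pderiv h * p = h^2"
proof -
  have d: "pderiv [:-x,1:] = (1::'a poly)" by (simp add: pderiv_pCons)
  have "pderiv p = [:-x,1:] * pderiv h + h" unfolding assms pderiv_mult d by simp
  then have "pderiv p * h - pderiv h * p = ([:-x,1:] * pderiv h + h) * h - pderiv h * ([:-x,1:] * h)"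
    using assms by simp
  also have "\<dots> = h^2" by (simp add: algebra_simps power2_eq_square)
  finally show ?thesis .
qed

lemma factor_poly:
  fixes p :: "real poly" and r :: "nat \<Rightarrow> real"
  assumes "degree p = n" "{x. poly p x = 0} = r ` {1..n}" "inj_on r {1..n}"
  shows "p = smult (lead_coeff p) (\<Prod>i\<in>{1..n}. [:-r i,1:])"
proof -
  have p0: "p \<noteq> 0"
  proof
    assume "p = 0"
    then have "{x. poly p x = 0} = UNIV" by simp
    with assms(2) have "finite (UNIV::real set)" by (metis finite_atLeastAtMost finite_imageI)
    then show False by (simp add: infinite_UNIV_char_0)
  qed
  let ?F = "\<Prod>i\<in>{1..n}. [:-r i,1:] :: real poly"
  have degF: "degree ?F = n" by (subst degree_prod_eq_sum_degree) auto
  have lcF: "lead_coeff ?F = 1" by (simp add: lead_coeff_prod)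
  show ?thesis
  proof (rule poly_eqI_degree_lead_coeff[where A = "r`{1..n}" and n = n])
    show "coeff p n = coeff (smult (lead_coeff p) ?F) n" using lcF degF assms(1) by simp
    show "n \<le> card (r ` {1..n})" using assms(3) by (simp add: card_image)
    show "degree p \<le> n" using assms by simp
    show "degree (smult (lead_coeff p) ?F) \<le> n" using degF by simp
    fix z assume z: "z \<in> r ` {1..n}"
    then have "poly p z = 0" using assms(2) by auto
    moreover from z obtain i where i: "i \<in> {1..n}" "z = r i" by auto
    have "poly ?F z = 0" unfolding poly_prod
      by (rule prod_zero) (use i in auto)
    ultimately show "poly p z = poly (smult (lead_coeff p) ?F) z" by simp
  qed
qed

lemma mp_pow2: "map_poly (of_real::real\<Rightarrow>complex) (p^2) = (map_poly of_real p)^2"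
  by (simp add: power2_eq_square mp_mult)

lemma W_repr:
  fixes p q :: "real poly" and k :: nat and pr qr :: "nat \<Rightarrow> real"
  assumes "k \<ge> 2"
    and "degree p = k" and "degree q = k - 1"
    and "{x. poly p x = 0} = pr ` {1..k}" and "strict_mono_on {1..k} pr"
    and "{x. poly q x = 0} = qr ` {1..k-1}" and "strict_mono_on {1..k-1} qr"
    and "\<And>j. j \<in> {1..k-1} \<Longrightarrow> pr j < qr j \<and> qr j < pr (j+1)"
  shows "\<exists>C d. C \<noteq> 0 \<and> (\<forall>i\<in>{1..k}. d i > (0::real)) \<and> (\<forall>z. poly (map_poly complex_of_real (wronskian p q)) z
     = of_real C * (\<Sum>i\<in>{1..k}. of_real (d i) * (\<Prod>l\<in>{1..k}-{i}. (z - of_real (pr l)))^2))"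
proof -
  define A where "A = lead_coeff p"
  define B where "B = lead_coeff q"
  have injp: "inj_on pr {1..k}" by (rule strict_mono_on_imp_inj_on) fact
  have injq: "inj_on qr {1..k-1}" by (rule strict_mono_on_imp_inj_on) fact
  have pf: "p = smult A (\<Prod>i\<in>{1..k}. [:-pr i,1:])" unfolding A_def
    by (rule factor_poly) (use assms injp in auto)
  have qf: "q = smult B (\<Prod>j\<in>{1..k-1}. [:-qr j,1:])" unfolding B_def
    by (rule factor_poly) (use assms injq in auto)
  have "p \<noteq> 0" using assms by auto
  then have A0: "A \<noteq> 0" unfolding A_def by simp
  have "q \<noteq> 0" using assms by auto
  then have B0: "B \<noteq> 0" unfolding B_def by simp
  define h where "h i = smult A (\<Prod>l\<in>{1..k}-{i}. [:-pr l,1:])" for i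
  have ph: "p = [:-pr i,1:] * h i" if "i \<in> {1..k}" for i
  proof -
    have "(\<Prod>l\<in>{1..k}. [:-pr l,1:]) = [:-pr i,1:] * (\<Prod>l\<in>{1..k}-{i}. [:-pr l,1:])"
      by (rule prod.remove) (use that in auto)
    then show ?thesis unfolding h_def by (subst pf) (simp add: mult_smult_right)
  qed
  have hval: "poly (h i) (pr i) = A * (\<Prod>l\<in>{1..k}-{i}. (pr i - pr l))" for i
    by (simp add: h_def poly_prod)
  have hnz: "poly (h i) (pr i) \<noteq> 0" if "i \<in> {1..k}" for i
  proof -
    have "(\<Prod>l\<in>{1..k}-{i}. (pr i - pr l)) \<noteq> 0"
    proof -
      have "\<forall>l\<in>{1..k}-{i}. pr i - pr l \<noteq> 0"
        using injp that by (auto dest: inj_onD)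
      then show ?thesis by simp
    qed
    then show ?thesis using A0 hval by simp
  qed
  have hzero: "poly (h i) (pr m) = 0" if "m \<in> {1..k}" "m \<noteq> i" for i m
    unfolding h_def poly_smult poly_prod
    by (subst prod_zero) (use that in auto)
  have degh: "degree (h i) \<le> k - 1" if "i \<in> {1..k}" for i
  proof -
    have "degree (\<Prod>l\<in>{1..k}-{i}. [:-pr l,1:]) = (\<Sum>l\<in>{1..k}-{i}. 1)"
      by (subst degree_prod_eq_sum_degree) auto
    also have "\<dots> = k - 1" using that by simp
    finally show ?thesis unfolding h_def by simp
  qed
  define c where "c i = poly q (pr i) / poly (h i) (pr i)" for i
  have qsum: "q = (\<Sum>i\<in>{1..k}. smult (c i) (h i))"
  proof (rule poly_eqI_degree[where A = "pr ` {1..k}"])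
    fix x assume "x \<in> pr ` {1..k}"
    then obtain m where m: "m \<in> {1..k}" "x = pr m" by auto
    have "poly (\<Sum>i\<in>{1..k}. smult (c i) (h i)) x = (\<Sum>i\<in>{1..k}. c i * poly (h i) (pr m))"
      by (simp add: poly_sum m)
    also have "\<dots> = c m * poly (h m) (pr m) + (\<Sum>i\<in>{1..k}-{m}. c i * poly (h i) (pr m))"
      by (rule sum.remove) (use m in auto)
    also have "(\<Sum>i\<in>{1..k}-{m}. c i * poly (h i) (pr m)) = 0"
      by (rule sum.neutral) (use m hzero in auto)
    also have "c m * poly (h m) (pr m) + 0 = c m * poly (h m) (pr m)" by simp
    also have "\<dots> = poly q x" using hnz[OF m(1)] m by (simp add: c_def)
    finally show "poly q x = poly (\<Sum>i\<in>{1..k}. smult (c i) (h i)) x" by simp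
  next
    show "degree q < card (pr ` {1..k})" using assms injp by (simp add: card_image)
  next
    have "degree (\<Sum>i\<in>{1..k}. smult (c i) (h i)) \<le> k - 1"
      by (rule degree_sum_le) (use degh degree_smult_le order_trans in blast)+
    then show "degree (\<Sum>i\<in>{1..k}. smult (c i) (h i)) < card (pr ` {1..k})"
      using assms injp by (simp add: card_image)
  qed
  have Wsum: "wronskian p q = (\<Sum>i\<in>{1..k}. smult (c i) ((h i)^2))"
  proof -
    have e1: "pderiv p * q = (\<Sum>i\<in>{1..k}. smult (c i) (pderiv p * h i))"
      by (subst qsum) (simp add: sum_distrib_left mult_smult_right)
    have e2: "pderiv q * p = (\<Sum>i\<in>{1..k}. smult (c i) (pderiv (h i) * p))"
      by (subst (1) qsum) (simp add: pderiv_sum' pderiv_smult sum_distrib_right mult_smult_left)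
    have "wronskian p q = (\<Sum>i\<in>{1..k}. smult (c i) (pderiv p * h i - pderiv (h i) * p))"
      unfolding wronskian_def e1 e2 by (simp add: sum_subtractf smult_diff_right)
    also have "\<dots> = (\<Sum>i\<in>{1..k}. smult (c i) ((h i)^2))"
      by (rule sum.cong) (auto simp: wr_lin[OF ph])
    finally show ?thesis .
  qed
  define s where "s = B / A"
  define d where "d i = c i / s" for i
  have s0: "s \<noteq> 0" using A0 B0 by (simp add: s_def)
  have dpos: "d i > 0" if i: "i \<in> {1..k}" for i
  proof -
    define \<sigma> where "\<sigma> j = (if j < i then j else j + 1)" for j :: nat
    define \<tau> where "\<tau> l = (if l < i then l else l - 1)" for l :: nat
    have bij: "bij_betw \<sigma> {1..k-1} ({1..k}-{i})"
      by (rule bij_betw_byWitness[where f' = \<tau>]) (use i in \<open>auto simp: \<sigma>_def \<tau>_def\<close>)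
    have qv: "poly q (pr i) = B * (\<Prod>j\<in>{1..k-1}. (pr i - qr j))"
      by (subst qf) (simp add: poly_prod)
    have den: "(\<Prod>l\<in>{1..k}-{i}. (pr i - pr l)) = (\<Prod>j\<in>{1..k-1}. (pr i - pr (\<sigma> j)))"
      using prod.reindex_bij_betw[OF bij, of "\<lambda>l. pr i - pr l"] by simp
    have "d i = (\<Prod>j\<in>{1..k-1}. (pr i - qr j)) / (\<Prod>l\<in>{1..k}-{i}. (pr i - pr l))"
      unfolding d_def c_def s_def qv hval using A0 B0 by (simp add: field_simps)
    also have "\<dots> = (\<Prod>j\<in>{1..k-1}. (pr i - qr j) / (pr i - pr (\<sigma> j)))"
      by (simp only: den prod_dividef)
    also have "\<dots> > 0"
    proof (rule prod_pos)
      fix j assume j: "j \<in> {1..k-1}"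
      note il = assms(8)[OF j]
      show "(pr i - qr j) / (pr i - pr (\<sigma> j)) > 0"
      proof (cases "j < i")
        case True
        then have "pr (j+1) \<le> pr i" using i j
          by (intro strict_mono_on_leD[OF assms(5)]) auto
        then show ?thesis using True il by (simp add: \<sigma>_def)
      next
        case False
        then have "pr i \<le> pr j" using i j
          by (intro strict_mono_on_leD[OF assms(5)]) auto
        then show ?thesis using False il by (auto simp: \<sigma>_def intro!: divide_neg_neg)
      qed
    qed
    finally show ?thesis .
  qed
  show ?thesis
  proof (intro exI conjI allI ballI)
    show "A^2 * s \<noteq> 0" using A0 s0 by simp
    show "d i > 0" if "i \<in> {1..k}" for i using dpos that .
    fix z
    have "poly (map_poly complex_of_real (wronskian p q)) z
       = (\<Sum>i\<in>{1..k}. of_real (c i) * (of_real A * (\<Prod>l\<in>{1..k}-{i}. (z - of_real (pr l))))^2)"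
      unfolding Wsum mp_sum mp_smult mp_pow2 h_def mp_prod mp_lin
      by (simp add: poly_sum poly_prod)
    also have "\<dots> = of_real (A^2 * s) * (\<Sum>i\<in>{1..k}. of_real (d i) * (\<Prod>l\<in>{1..k}-{i}. (z - of_real (pr l)))^2)"
      unfolding sum_distrib_left
      by (rule sum.cong) (use s0 in \<open>auto simp: d_def power_mult_distrib\<close>)
    finally show "poly (map_poly complex_of_real (wronskian p q)) z = of_real (A^2 * s) * (\<Sum>i\<in>{1..k}. of_real (d i) * (\<Prod>l\<in>{1..k}-{i}. (z - of_real (pr l)))^2)" .
  qed
qed

lemma key_t:
  fixes a b :: complex and t :: real
  shows "Re (cnj (a*b) * (of_real t * a + of_real (1-t) * b)^2)
    = t^2 * (cmod a)^2 * Re (a * cnj b) + 2*t*(1-t)*((cmod a)^2*(cmod b)^2) + (1-t)^2*(cmod b)^2*Re (a * cnj b)"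
proof -
  obtain a1 a2 b1 b2 where "a = Complex a1 a2" "b = Complex b1 b2" by (metis complex.exhaust_sel)
  then show ?thesis unfolding cmod_power2 by (simp add: power2_eq_square algebra_simps)
qed

lemma disk_re:
  fixes z :: complex and a b :: real
  shows "(cmod (z - of_real ((a+b)/2)))^2 - ((b-a)/2)^2 = Re ((z - of_real a) * cnj (z - of_real b))"
proof -
  obtain z1 z2 where "z = Complex z1 z2" by (metis complex.exhaust_sel)
  then show ?thesis unfolding cmod_power2 by (simp add: power2_eq_square field_simps)
qed

lemma param:
  fixes z :: complex and p1 p2 x :: real
  assumes "p1 < p2"
  defines "t \<equiv> (p2 - x) / (p2 - p1)"
  shows "z - of_real x = of_real t * (z - of_real p1) + of_real (1-t) * (z - of_real p2)"
proof -
  have "t * (p2 - p1) = p2 - x" using assms by (simp add: t_def)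
  then have "x = t * p1 + (1 - t) * p2" by algebra
  then have "of_real x = (of_real t * of_real p1 + of_real (1-t) * of_real p2 :: complex)"
    by (metis of_real_add of_real_mult)
  then show ?thesis by (simp add: algebra_simps)
qed

lemma quad_pos:
  fixes z :: complex and p1 p2 x :: real
  assumes "p1 < p2" "p1 \<le> x" "x \<le> p2" "Re ((z - of_real p1) * cnj (z - of_real p2)) > 0"
  shows "Re (cnj ((z - of_real p1) * (z - of_real p2)) * (z - of_real x)^2) > 0"
proof -
  define a where "a = z - of_real p1"
  define b where "b = z - of_real p2"
  define t where "t = (p2 - x) / (p2 - p1)"
  define R where "R = Re (a * cnj b)"
  have R: "R > 0" using assms by (simp add: R_def a_def b_def)
  have "a \<noteq> 0" "b \<noteq> 0" using R by (auto simp: R_def)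
  then have ab: "cmod a > 0" "cmod b > 0" by auto
  have t: "0 \<le> t" "t \<le> 1" using assms by (auto simp: t_def field_simps)
  have eq: "z - of_real x = of_real t * a + of_real (1-t) * b"
    unfolding a_def b_def t_def by (rule param) fact
  have "Re (cnj (a*b) * (z - of_real x)^2) = t^2 * (cmod a)^2 * R + 2*t*(1-t)*((cmod a)^2*(cmod b)^2) + (1-t)^2*(cmod b)^2*R"
    unfolding eq key_t R_def ..
  also have "\<dots> > 0"
  proof -
    have h1: "t^2 * (cmod a)^2 * R \<ge> 0" using R by simp
    have h2: "2*t*(1-t)*((cmod a)^2*(cmod b)^2) \<ge> 0" using t by simp
    have h3: "(1-t)^2*(cmod b)^2*R \<ge> 0" using R by simp
    show ?thesis
    proof (cases "t = 0")
      case True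
      then show ?thesis using R ab by simp
    next
      case False
      then have "t^2 * (cmod a)^2 * R > 0" using R ab by simp
      then show ?thesis using h2 h3 by linarith
    qed
  qed
  finally show ?thesis by (simp add: a_def b_def)
qed

lemma quad_neg:
  fixes z :: complex and p1 p2 x :: real
  assumes "p1 < p2" "x \<le> p1 \<or> p2 \<le> x" "Re ((z - of_real p1) * cnj (z - of_real p2)) < 0"
  shows "Re (- cnj ((z - of_real p1) * (z - of_real p2)) * (z - of_real x)^2) > 0"
proof -
  define a where "a = z - of_real p1"
  define b where "b = z - of_real p2"
  define t where "t = (p2 - x) / (p2 - p1)"
  define R where "R = Re (a * cnj b)"
  have R: "R < 0" using assms by (simp add: R_def a_def b_def)
  have "a \<noteq> 0" "b \<noteq> 0" using R by (auto simp: R_def)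
  then have ab: "cmod a > 0" "cmod b > 0" by auto
  have t: "t \<ge> 1 \<or> t \<le> 0" using assms by (auto simp: t_def field_simps)
  have eq: "z - of_real x = of_real t * a + of_real (1-t) * b"
    unfolding a_def b_def t_def by (rule param) fact
  have "Re (- cnj (a*b) * (z - of_real x)^2) = - (t^2 * (cmod a)^2 * R + 2*t*(1-t)*((cmod a)^2*(cmod b)^2) + (1-t)^2*(cmod b)^2*R)"
    unfolding eq key_t[symmetric] R_def by simp
  also have "\<dots> > 0"
  proof -
    have h1: "t^2 * (cmod a)^2 * R \<le> 0" using R by (simp add: mult_nonneg_nonpos)
    have h2: "t*(1-t) \<le> 0" using t by (auto simp: mult_nonneg_nonpos mult_nonpos_nonneg)
    then have h2: "2*t*(1-t)*((cmod a)^2*(cmod b)^2) \<le> 0" by (simp add: mult_nonpos_nonneg)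
    have h3: "(1-t)^2*(cmod b)^2*R \<le> 0" using R by (simp add: mult_nonneg_nonpos)
    show ?thesis
    proof (cases "t = 0")
      case True
      then show ?thesis using R ab by (simp add: mult_pos_neg)
    next
      case False
      then have "t^2 * (cmod a)^2 * R < 0" using R ab by (simp add: mult_pos_neg)
      then show ?thesis using h2 h3 by linarith
    qed
  qed
  finally show ?thesis by (simp add: a_def b_def)
qed

lemma Re_cnj_div: "w \<noteq> 0 \<Longrightarrow> Re (cnj u / w) = Re (u * w) / (cmod w)^2"
  by (simp add: Re_divide')

lemma sum_nonzero:
  fixes E :: "nat \<Rightarrow> complex" and d :: "nat \<Rightarrow> real" and I :: "nat set"
  assumes "finite I" "I \<noteq> {}" "\<And>i. i\<in>I \<Longrightarrow> d i > 0" "\<And>i. i\<in>I \<Longrightarrow> Re (u * (E i)^2) > 0"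
  shows "(\<Sum>i\<in>I. of_real (d i) * (\<Prod>l\<in>I-{i}. E l)^2) \<noteq> 0"
proof -
  have E0: "E i \<noteq> 0" if "i \<in> I" for i using assms(4)[OF that] by auto
  define P where "P = (\<Prod>l\<in>I. E l)"
  have P0: "P \<noteq> 0" using E0 assms(1) by (simp add: P_def)
  have rem: "(\<Prod>l\<in>I-{i}. E l) = P / E i" if "i \<in> I" for i
  proof -
    have "P = E i * (\<Prod>l\<in>I-{i}. E l)" unfolding P_def by (rule prod.remove) (use assms that in auto)
    then show ?thesis using E0[OF that] by (simp add: field_simps)
  qed
  define S where "S = (\<Sum>i\<in>I. of_real (d i) / (E i)^2)"
  have eq: "(\<Sum>i\<in>I. of_real (d i) * (\<Prod>l\<in>I-{i}. E l)^2) = P^2 * S"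
    unfolding S_def sum_distrib_left
    by (rule sum.cong) (auto simp: rem power_divide)
  have "Re (cnj u * S) = (\<Sum>i\<in>I. d i * (Re (u * (E i)^2) / (cmod ((E i)^2))^2))"
    unfolding S_def sum_distrib_left Re_sum
  proof (rule sum.cong)
    fix i assume i: "i \<in> I"
    have "cnj u * (of_real (d i) / (E i)^2) = of_real (d i) * (cnj u / (E i)^2)" by simp
    then have "Re (cnj u * (of_real (d i) / (E i)^2)) = d i * Re (cnj u / (E i)^2)"
      by (simp del: times_divide_eq_right)
    then show "Re (cnj u * (of_real (d i) / (E i)^2)) = d i * (Re (u * (E i)^2) / (cmod ((E i)^2))^2)"
      using Re_cnj_div[of "(E i)^2" u] E0[OF i] by simp
  qed simp
  also have "\<dots> > 0"
    by (rule sum_pos) (use assms E0 in \<open>auto intro!: mult_pos_pos divide_pos_pos\<close>)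
  finally have "S \<noteq> 0" by auto
  then show ?thesis using eq P0 by simp
qed

theorem theorem1:
  fixes p q :: "real poly" and k :: nat and pr qr :: "nat \<Rightarrow> real" and z :: complex
  assumes "k \<ge> 2"
    and "degree p = k" and "degree q = k - 1"
    and "{x. poly p x = 0} = pr ` {1..k}" and "strict_mono_on {1..k} pr"
    and "\<And>x. x \<in> {1..k} \<Longrightarrow> order (pr x) p = 1"
    and "{x. poly q x = 0} = qr ` {1..k-1}" and "strict_mono_on {1..k-1} qr"
    and "\<And>x. x \<in> {1..k-1} \<Longrightarrow> order (qr x) q = 1"
    and "\<And>j. j \<in> {1..k-1} \<Longrightarrow> pr j < qr j \<and> qr j < pr (j+1)"
    and "poly (map_poly complex_of_real (wronskian p q)) z = 0"
  shows "z \<in> Omega k pr"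
proof -
  obtain C d where C0: "C \<noteq> 0" and dpos: "\<forall>i\<in>{1..k}. d i > (0::real)"
    and Wz: "\<forall>z. poly (map_poly complex_of_real (wronskian p q)) z
     = of_real C * (\<Sum>i\<in>{1..k}. of_real (d i) * (\<Prod>l\<in>{1..k}-{i}. (z - of_real (pr l)))^2)"
    using W_repr[OF assms(1-5) assms(7,8,10)] by blast
  have nu: "\<not>(\<exists>u. \<forall>i\<in>{1..k}. Re (u * (z - of_real (pr i))^2) > 0)"
  proof
    assume "\<exists>u. \<forall>i\<in>{1..k}. Re (u * (z - of_real (pr i))^2) > 0"
    then obtain u where u: "\<forall>i\<in>{1..k}. Re (u * (z - of_real (pr i))^2) > 0" by blast
    have "(\<Sum>i\<in>{1..k}. of_real (d i) * (\<Prod>l\<in>{1..k}-{i}. (z - of_real (pr l)))^2) \<noteq> 0"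
      by (rule sum_nonzero[where u = u]) (use u dpos assms(1) in auto)
    then show False using Wz assms(11) C0 by simp
  qed
  have mono: "pr i \<le> pr j" if "i \<in> {1..k}" "j \<in> {1..k}" "i \<le> j" for i j
    by (rule strict_mono_on_leD[OF assms(5)]) (use that in auto)
  have p1k: "pr 1 < pr k" by (rule strict_mono_onD[OF assms(5)]) (use assms(1) in auto)
  have R0: "(pr k - pr 1)/2 > 0" using p1k by simp
  have in0: "z \<in> closure (diam_disk (pr 1) (pr k))"
    unfolding diam_disk_def closure_ball[OF R0] mem_cball dist_norm
  proof (rule ccontr)
    assume "\<not> cmod (of_real ((pr 1 + pr k)/2) - z) \<le> (pr k - pr 1)/2"
    then have "(pr k - pr 1)/2 < cmod (z - of_real ((pr 1 + pr k)/2))" by (simp add: norm_minus_commute)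
    then have "((pr k - pr 1)/2)^2 < (cmod (z - of_real ((pr 1 + pr k)/2)))^2"
      by (rule power_strict_mono) (use R0 in auto)
    then have re: "Re ((z - of_real (pr 1)) * cnj (z - of_real (pr k))) > 0"
      using disk_re[of z "pr 1" "pr k"] by linarith
    have "\<forall>i\<in>{1..k}. Re (cnj ((z - of_real (pr 1)) * (z - of_real (pr k))) * (z - of_real (pr i))^2) > 0"
    proof
      fix i assume i: "i \<in> {1..k}"
      show "Re (cnj ((z - of_real (pr 1)) * (z - of_real (pr k))) * (z - of_real (pr i))^2) > 0"
        by (rule quad_pos[OF p1k _ _ re]) (use i assms(1) mono in auto)
    qed
    with nu show False by blast
  qed
  have out: "z \<notin> diam_disk (pr j) (pr (j+1))" if j: "j \<in> {1..k-1}" for j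
  proof
    assume "z \<in> diam_disk (pr j) (pr (j+1))"
    then have c: "cmod (z - of_real ((pr j + pr (j+1))/2)) < (pr (j+1) - pr j)/2"
      unfolding diam_disk_def mem_ball dist_norm by (simp add: norm_minus_commute)
    then have "(cmod (z - of_real ((pr j + pr (j+1))/2)))^2 < ((pr (j+1) - pr j)/2)^2"
      by (rule power_strict_mono) auto
    then have re: "Re ((z - of_real (pr j)) * cnj (z - of_real (pr (j+1)))) < 0"
      using disk_re[of z "pr j" "pr (j+1)"] by linarith
    have pj: "pr j < pr (j+1)" by (rule strict_mono_onD[OF assms(5)]) (use j in auto)
    have "\<forall>i\<in>{1..k}. Re (- cnj ((z - of_real (pr j)) * (z - of_real (pr (j+1)))) * (z - of_real (pr i))^2) > 0"
    proof
      fix i assume i: "i \<in> {1..k}"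
      have "pr i \<le> pr j \<or> pr (j+1) \<le> pr i"
      proof (cases "i \<le> j")
        case True then show ?thesis using mono[of i j] i j by auto
      next
        case False then show ?thesis using mono[of "j+1" i] i j by auto
      qed
      then show "Re (- cnj ((z - of_real (pr j)) * (z - of_real (pr (j+1)))) * (z - of_real (pr i))^2) > 0"
        by (rule quad_neg[OF pj _ re])
    qed
    with nu show False by blast
  qed
  show ?thesis unfolding Omega_def using in0 out by auto
qed

end
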